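(* For $n\ge1$ and $0\le i\le\lfloor n/2\rfloor$, $b(n,i,i)=\dfrac{n!}{i!(n-2i)!2^i}$.
   Context: The integers $b(n,i,j)$ ($n\ge1$) are defined by $b(1,0,0)=1$, $b(1,i,j)=0$ for $(i,j)\ne(0,0)$, $b(n,i,j)=0$ if $i<0$ or $j<0$, and $b(n+1,i,j)=b(n,i,j)+2i\,b(n,i,j-1)+(n-2i+2)\,b(n,i-1,j-1)$. (Equivalently, $b(n,i,j)$ is the number of $\pi\in\mathfrak{S}_n$ with $i$ cycle peaks — indices $m$ with $\pi^{-1}(m)<m>\pi(m)$ — and $n-j$ cycles.) *)

theory Defs
  imports Complex_Main
begin

text \<open>b n i j for n \<ge> 1 with integer indices i, j (zero when i < 0 or j < 0).
  The value at n = 0 is irrelevant and set to 0.\<close>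
fun b :: "nat \<Rightarrow> int \<Rightarrow> int \<Rightarrow> int" where
  "b 0 i j = 0"
| "b (Suc 0) i j = (if i = 0 \<and> j = 0 then 1 else 0)"
| "b (Suc (Suc n)) i j =
     (if i < 0 \<or> j < 0 then 0 else
        b (Suc n) i j + 2 * i * b (Suc n) i (j - 1)
        + (int (Suc n) - 2 * i + 2) * b (Suc n) (i - 1) (j - 1))"

end

theory Submission
  imports Defs
begin

lemma b_neg: "i < 0 \<Longrightarrow> b n i j = 0"
  by (cases "(n,i,j)" rule: b.cases) auto

lemma b_step: "b (Suc (Suc m)) i j =
     (if i < 0 \<or> j < 0 then 0 else
        b (Suc m) i j + 2 * i * b (Suc m) i (j - 1)
        + (int (Suc m) - 2 * i + 2) * b (Suc m) (i - 1) (j - 1))"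
  by simp

lemma b_below: "j < i \<Longrightarrow> b n i j = 0"
proof (induction n arbitrary: i j)
  case 0 then show ?case by simp
next
  case (Suc n)
  show ?case
  proof (cases n)
    case 0 then show ?thesis using Suc.prems by auto
  next
    case (Suc m)
    have "b (Suc n) i j =
     (if i < 0 \<or> j < 0 then 0 else
        b (Suc m) i j + 2 * i * b (Suc m) i (j - 1)
        + (int (Suc m) - 2 * i + 2) * b (Suc m) (i - 1) (j - 1))"
      using Suc by simp
    also have "\<dots> = 0" using Suc.IH[of j i] Suc.IH[of "j-1" i] Suc.IH[of "j-1" "i-1"] Suc.prems Suc
      by auto
    finally show ?thesis .
  qed
qed

lemma alg: fixes F K D P a c :: real
  assumes "K > 0" "D > 0" "P > 0" "a > 0" "c > 0"
  shows "F/(a*K*D*(2*P)) + (c+1)*(F/(K*((c+1)*c*D)*P)) = ((c+2*a)*F)/(a*K*(c*D)*(2*P))"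
proof -
  have "c+1 > 0" using assms by auto
  hence 1: "(c+1)*(F/(K*((c+1)*c*D)*P)) = (2*a*F)/(a*K*(c*D)*(2*P))"
    using assms by (simp add: divide_simps; simp add: algebra_simps)
  have 2: "F/(a*K*D*(2*P)) = (c*F)/(a*K*(c*D)*(2*P))"
    using assms by (simp add: divide_simps; simp add: algebra_simps)
  show ?thesis unfolding 1 2 by (simp only: add_divide_distrib[symmetric] distrib_right)
qed

lemma main: "n \<ge> 1 \<Longrightarrow> real_of_int (b n (int i) (int i)) =
   (if 2 * i \<le> n then fact n / (fact i * fact (n - 2 * i) * 2 ^ i) else 0)"
proof (induction n arbitrary: i)
  case 0 then show ?case by simp
next
  case (Suc n)
  show ?case
  proof (cases n)
    case 0 then show ?thesis by (cases i) auto
  next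
    case (Suc m)
    have n1: "n \<ge> 1" using Suc by simp
    note IH = Suc.IH[OF n1]
    show ?thesis
    proof (cases i)
      case 0
      have "b (Suc n) 0 0 = b n 0 0"
        using Suc b_neg[of "-1" "Suc m" "-1"] by simp
      then show ?thesis using IH[of 0] 0 by simp
    next
      case (Suc k)
      have rec: "b (Suc n) (int i) (int i) = b n (int i) (int i) + (int n - 2 * int k) * b n (int k) (int k)"
        using \<open>n = Suc m\<close> Suc b_below[of "int i - 1" "int i" "Suc m"] by simp
      hence rec': "real_of_int (b (Suc n) (int i) (int i)) = real_of_int (b n (int i) (int i)) + (real n - 2 * real k) * real_of_int (b n (int k) (int k))"
        by simp
      show ?thesis
      proof (cases "2 * k + 2 \<le> n")
        case True
        define d where "d = n - 2 * k - 2"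
        have d: "n = d + 2 * k + 2" using True d_def by simp
        have e1: "n - 2 * i = d" "n - 2 * k = d + 2" "Suc n - 2 * i = d + 1" "2 * i \<le> n" "2 * k \<le> n" "2 * i \<le> Suc n" "n - Suc (2 * k) = d + 1"
          using d Suc by auto
        have e2: "real n - 2 * real k = (real d + 1) + 1" using d by simp
        have f1: "fact (Suc k) = (real k + 1) * (fact k :: real)" by (simp add: algebra_simps)
        have f2: "fact (d + 2) = ((real d + 1) + 1) * (real d + 1) * (fact d :: real)"
          by (simp add: numeral_2_eq_2 algebra_simps)
        have f3: "fact (d + 1) = (real d + 1) * (fact d :: real)" by (simp add: algebra_simps)
        have f4: "fact (Suc n) = ((real d + 1) + 2 * (real k + 1)) * (fact n :: real)"
          by (simp add: d algebra_simps del: fact_Suc) (simp add: algebra_simps)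
        have "real_of_int (b (Suc n) (int i) (int i)) =
          fact n / (fact i * fact d * 2 ^ i) + ((real d + 1) + 1) * (fact n / (fact k * fact (d+2) * 2 ^ k))"
          using rec' IH[of i] IH[of k] e1 e2 by simp
        also have "\<dots> = fact n / ((real k + 1) * fact k * fact d * (2 * 2 ^ k)) + ((real d + 1) + 1) * (fact n / (fact k * (((real d + 1) + 1) * (real d + 1) * fact d) * 2 ^ k))"
          unfolding f2 \<open>i = Suc k\<close> f1 power_Suc by simp
        also have "\<dots> = (((real d + 1) + 2 * (real k + 1)) * fact n) / ((real k + 1) * fact k * ((real d + 1) * fact d) * (2 * 2 ^ k))"
          by (rule alg) auto
        also have "\<dots> = fact (Suc n) / (fact i * fact (Suc n - 2 * i) * 2 ^ i)"
          unfolding f4 e1 f3 \<open>i = Suc k\<close> f1 power_Suc by (simp add: e1)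
        finally show ?thesis using e1 by simp
      next
        case False
        show ?thesis
        proof (cases "2 * k + 1 = n")
          case True
          have t1: "n - 2 * k = 1" "real n - 2 * real k = 1" using True by auto
          have "real_of_int (b (Suc n) (int i) (int i)) = fact n / (fact k * 2 ^ k)"
            using rec' IH[of i] IH[of k] Suc True t1 by simp
          also have "\<dots> = fact (Suc n) / (fact (Suc k) * 2 ^ Suc k)"
          proof -
            have g1: "fact (Suc n) = 2 * (real k + 1) * (fact n :: real)" using True[symmetric] by (simp add: algebra_simps)
            have g2: "fact (Suc k) = (real k + 1) * (fact k :: real)" by (simp add: algebra_simps)
            have "real k + 1 \<noteq> 0" by simp
            then show ?thesis unfolding g1 g2 power_Suc by (simp add: divide_simps; simp add: algebra_simps)
          qed
          finally show ?thesis using Suc True by simp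
        next
          case F2: False
          have "real n - 2 * real k = 0 \<or> \<not> 2 * k \<le> n" using False F2 by auto
          then show ?thesis using rec' IH[of i] IH[of k] Suc False F2 by auto
        qed
      qed
    qed
  qed
qed

theorem corollary6:
  fixes n i :: nat
  assumes "n \<ge> 1" and "i \<le> n div 2"
  shows "real_of_int (b n (int i) (int i)) = fact n / (fact i * fact (n - 2 * i) * 2 ^ i)"
  using main[OF assms(1), of i] assms(2) by auto

end
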